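(* Let $G$ be a finite connected graph with node set $V$ and let $r$ be a ranking of $V$. Algorithm 1 (described in the context) run on $G$ and $r$ terminates and outputs a value, a node $c$ and a set $L$ such that the value equals $\operatorname{rad}(G)$, $e(c)=\operatorname{rad}(G)$ (i.e. $c$ is a center), and $L$ is a radius certificate with $L\subseteq A_r(V)$. It performs at most $2|L|+1$ one-to-all distance queries; in particular $O(|A_r(V)|)$ queries.
   Context: $G$ is undirected, unweighted, connected with finite node set $V$; $d$ is the shortest-path distance, $e(u)=\max_v d(u,v)$, $\operatorname{rad}(G)=\min_u e(u)$. A ranking $r$ is an injective map from $V$ to a totally ordered set; the antipode $A_r(u)$ is the node $v$ maximizing $(d(u,v),r(v))$ lexicographically, and $A_r(W)=\{A_r(u):u\in W\}$. A one-to-all distance query from $x$ computes $(d(x,v))_{v\in V}$. For $L\subseteq V$ let $e_L(v)=\max_{x\in L}d(v,x)$ ($=0$ if $L=\emptyset$). A radius certificate is a set $L$ with $e_L(v)\ge\operatorname{rad}(G)$ for all $v\in V$. Algorithm 1: start with $L=K=\emptyset$. Repeat iterations: (1) select $u\in V$ with $e_L(u)$ minimal (ties arbitrary); (2) query from $u$ and compute $e(u)$; (3) if $e(u)=e_L(u)$, halt and output $e(u)$, $u$, $L$; (4) otherwise let $a=A_r(u)$, query from $a$, add $u$ to $K$ and $a$ to $L$ and update $e_L$. After each iteration not halting in (3), if $\min_{v\in V}e_L(v)\ge\min_{w\in K}e(w)$, halt and output $e(c)$, $c$, $L$ where $c\in K$ minimizes $e$ over $K$; otherwise start a new iteration. 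*)

theory Defs
  imports Main
begin

inductive walk :: "('a \<Rightarrow> 'a \<Rightarrow> bool) \<Rightarrow> nat \<Rightarrow> 'a \<Rightarrow> 'a \<Rightarrow> bool" for E where
  walk0: "walk E 0 u u"
| walkS: "E u w \<Longrightarrow> walk E n w v \<Longrightarrow> walk E (Suc n) u v"

definition simple_graph :: "'a set \<Rightarrow> ('a \<Rightarrow> 'a \<Rightarrow> bool) \<Rightarrow> bool" where
  "simple_graph V E \<longleftrightarrow> (\<forall>u v. E u v \<longrightarrow> u \<in> V \<and> v \<in> V \<and> E v u \<and> u \<noteq> v)"

definition connected_graph :: "'a set \<Rightarrow> ('a \<Rightarrow> 'a \<Rightarrow> bool) \<Rightarrow> bool" where
  "connected_graph V E \<longleftrightarrow> V \<noteq> {} \<and> (\<forall>u\<in>V. \<forall>v\<in>V. \<exists>n. walk E n u v)"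

definition dist :: "('a \<Rightarrow> 'a \<Rightarrow> bool) \<Rightarrow> 'a \<Rightarrow> 'a \<Rightarrow> nat" where
  "dist E u v = (LEAST n. walk E n u v)"

definition ecc :: "'a set \<Rightarrow> ('a \<Rightarrow> 'a \<Rightarrow> bool) \<Rightarrow> 'a \<Rightarrow> nat" where
  "ecc V E u = Max (dist E u ` V)"

definition rad :: "'a set \<Rightarrow> ('a \<Rightarrow> 'a \<Rightarrow> bool) \<Rightarrow> nat" where
  "rad V E = Min (ecc V E ` V)"

definition antipode :: "'a set \<Rightarrow> ('a \<Rightarrow> 'a \<Rightarrow> bool) \<Rightarrow> ('a \<Rightarrow> 'b::linorder) \<Rightarrow> 'a \<Rightarrow> 'a" where
  "antipode V E r u = (THE v. v \<in> V \<and> (\<forall>w\<in>V. dist E u w < dist E u v \<or>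
                         (dist E u w = dist E u v \<and> r w \<le> r v)))"

definition eL :: "('a \<Rightarrow> 'a \<Rightarrow> bool) \<Rightarrow> 'a set \<Rightarrow> 'a \<Rightarrow> nat" where
  "eL E L v = (if L = {} then 0 else Max ((\<lambda>x. dist E v x) ` L))"

definition radius_certificate :: "'a set \<Rightarrow> ('a \<Rightarrow> 'a \<Rightarrow> bool) \<Rightarrow> 'a set \<Rightarrow> bool" where
  "radius_certificate V E L \<longleftrightarrow> (\<forall>v\<in>V. eL E L v \<ge> rad V E)"

text \<open>Configurations of Algorithm 1: Running L K q (q = number of queries performed so far),
  or Done value c L q (the output together with the total number of queries).\<close>
datatype 'a config = Running "'a set" "'a set" nat | Done nat 'a "'a set" nat

text \<open>One iteration of Algorithm 1 (nondeterministic in the tie-breaking choices).\<close>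
inductive alg_step :: "'a set \<Rightarrow> ('a \<Rightarrow> 'a \<Rightarrow> bool) \<Rightarrow> ('a \<Rightarrow> 'b::linorder)
                        \<Rightarrow> 'a config \<Rightarrow> 'a config \<Rightarrow> bool" for V E r where
  halt: "u \<in> V \<Longrightarrow> (\<forall>v\<in>V. eL E L u \<le> eL E L v) \<Longrightarrow> ecc V E u = eL E L u \<Longrightarrow>
         alg_step V E r (Running L K q) (Done (ecc V E u) u L (q + 1))"
| stop: "u \<in> V \<Longrightarrow> (\<forall>v\<in>V. eL E L u \<le> eL E L v) \<Longrightarrow> ecc V E u \<noteq> eL E L u \<Longrightarrow>
         a = antipode V E r u \<Longrightarrow>
         Min (eL E (insert a L) ` V) \<ge> Min (ecc V E ` insert u K) \<Longrightarrow>
         c \<in> insert u K \<Longrightarrow> (\<forall>w\<in>insert u K. ecc V E c \<le> ecc V E w) \<Longrightarrow>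
         alg_step V E r (Running L K q) (Done (ecc V E c) c (insert a L) (q + 2))"
| cont: "u \<in> V \<Longrightarrow> (\<forall>v\<in>V. eL E L u \<le> eL E L v) \<Longrightarrow> ecc V E u \<noteq> eL E L u \<Longrightarrow>
         a = antipode V E r u \<Longrightarrow>
         \<not> (Min (eL E (insert a L) ` V) \<ge> Min (ecc V E ` insert u K)) \<Longrightarrow>
         alg_step V E r (Running L K q) (Running (insert a L) (insert u K) (q + 2))"

definition alg_init :: "'a config" where
  "alg_init = Running {} {} 0"

definition alg_reachable :: "'a set \<Rightarrow> ('a \<Rightarrow> 'a \<Rightarrow> bool) \<Rightarrow> ('a \<Rightarrow> 'b::linorder) \<Rightarrow> 'a config \<Rightarrow> bool" where
  "alg_reachable V E r s \<longleftrightarrow> (alg_step V E r)\<^sup>*\<^sup>* alg_init s"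

end

theory Submission
  imports Defs
begin

lemma eL_le_ecc:
  assumes "finite V" "L \<subseteq> V"
  shows "eL E L v \<le> ecc V E v"
proof (cases "L = {}")
  case True then show ?thesis by (simp add: eL_def)
next
  case False
  then show ?thesis unfolding eL_def ecc_def
    using assms by (auto intro!: Max_mono)
qed

lemma dist_le_eL:
  assumes "finite L" "x \<in> L"
  shows "dist E v x \<le> eL E L v"
  using assms unfolding eL_def by auto

lemma rad_le: "finite V \<Longrightarrow> v \<in> V \<Longrightarrow> rad V E \<le> ecc V E v"
  unfolding rad_def by auto

lemma rad_attained: "finite V \<Longrightarrow> V \<noteq> {} \<Longrightarrow> \<exists>v\<in>V. rad V E = ecc V E v"
proof -
  assume a: "finite V" "V \<noteq> {}"
  have "Min (ecc V E ` V) \<in> ecc V E ` V" using a by (intro Min_in) auto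
  then show ?thesis unfolding rad_def by auto
qed

lemma antipode_props:
  assumes fin: "finite V" and inj: "inj_on r V" and u: "u \<in> V"
  shows "antipode V E r u \<in> V \<and> dist E u (antipode V E r u) = ecc V E u"
proof -
  define M where "M = ecc V E u"
  define S where "S = {v\<in>V. dist E u v = M}"
  have "M \<in> dist E u ` V" unfolding M_def ecc_def using fin u by (intro Max_in) auto
  then have Sne: "S \<noteq> {}" unfolding S_def by auto
  have Sfin: "finite S" unfolding S_def using fin by auto
  have "Max (r ` S) \<in> r ` S" using Sne Sfin by (intro Max_in) auto
  then obtain v where vS: "v \<in> S" and rv: "r v = Max (r ` S)" by auto
  have Mge: "\<And>w. w \<in> V \<Longrightarrow> dist E u w \<le> M" unfolding M_def ecc_def using fin by auto
  define P where "P = (\<lambda>v. v \<in> V \<and> (\<forall>w\<in>V. dist E u w < dist E u v \<or>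
                         (dist E u w = dist E u v \<and> r w \<le> r v)))"
  have Pv: "P v"
  proof -
    have "v \<in> V" "dist E u v = M" using vS unfolding S_def by auto
    moreover have "\<forall>w\<in>V. dist E u w < dist E u v \<or> (dist E u w = dist E u v \<and> r w \<le> r v)"
    proof
      fix w assume w: "w \<in> V"
      show "dist E u w < dist E u v \<or> (dist E u w = dist E u v \<and> r w \<le> r v)"
      proof (cases "dist E u w = M")
        case True
        then have "w \<in> S" unfolding S_def using w by auto
        then have "r w \<le> r v" using rv Sfin by auto
        then show ?thesis using True \<open>dist E u v = M\<close> by auto
      next
        case False then show ?thesis using Mge[OF w] \<open>dist E u v = M\<close> by auto
      qed
    qed
    ultimately show ?thesis unfolding P_def by auto
  qed
  have uniq: "\<And>v'. P v' \<Longrightarrow> v' = v"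
  proof -
    fix v' assume "P v'"
    then have v'V: "v' \<in> V" and h1: "\<forall>w\<in>V. dist E u w < dist E u v' \<or> (dist E u w = dist E u v' \<and> r w \<le> r v')"
      unfolding P_def by auto
    from Pv have vV: "v \<in> V" and h2: "\<forall>w\<in>V. dist E u w < dist E u v \<or> (dist E u w = dist E u v \<and> r w \<le> r v)"
      unfolding P_def by auto
    from h1 vV h2 v'V have "r v = r v'" by fastforce
    then show "v' = v" using inj vV v'V by (auto dest: inj_onD)
  qed
  have "antipode V E r u = (THE v. P v)" unfolding antipode_def P_def by simp
  also have "\<dots> = v" using the_equality[of P v, OF Pv uniq] .
  finally have "antipode V E r u = v" .
  then show ?thesis using vS unfolding S_def M_def by auto
qed

definition final_ok :: "'a set \<Rightarrow> ('a \<Rightarrow> 'a \<Rightarrow> bool) \<Rightarrow> ('a \<Rightarrow> 'b::linorder) \<Rightarrow> nat \<Rightarrow> 'a \<Rightarrow> 'a set \<Rightarrow> nat \<Rightarrow> bool" where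
  "final_ok V E r val c L q \<longleftrightarrow> val = rad V E \<and> c \<in> V \<and> ecc V E c = rad V E \<and>
           radius_certificate V E L \<and> L \<subseteq> antipode V E r ` V \<and>
           q \<le> 2 * card L + 1 \<and> q \<le> 2 * card (antipode V E r ` V) + 1"

fun ainv :: "'a set \<Rightarrow> ('a \<Rightarrow> 'a \<Rightarrow> bool) \<Rightarrow> ('a \<Rightarrow> 'b::linorder) \<Rightarrow> 'a config \<Rightarrow> bool" where
  "ainv V E r (Running L K q) = (L \<subseteq> antipode V E r ` V \<and> K \<subseteq> V \<and> q = 2 * card L)"
| "ainv V E r (Done val c L q) = final_ok V E r val c L q"

lemma ant_sub:
  assumes "finite V" "inj_on r V"
  shows "antipode V E r ` V \<subseteq> V"
proof
  fix x assume "x \<in> antipode V E r ` V"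
  then obtain u where "u \<in> V" "x = antipode V E r u" by auto
  then show "x \<in> V" using antipode_props[OF assms, of u E] by auto
qed

lemma step_pres:
  assumes fin: "finite V" and inj: "inj_on r V"
    and st: "alg_step V E r s s'" and iv: "ainv V E r s"
  shows "ainv V E r s'"
  using st iv
proof cases
  case (halt u L K q)
  have LV: "L \<subseteq> V" using iv halt ant_sub[OF fin inj, where E=E] by auto
  have finL: "finite L" using LV fin finite_subset by blast
  have le: "\<And>v. v \<in> V \<Longrightarrow> ecc V E u \<le> ecc V E v"
    using halt eL_le_ecc[OF fin LV] by (metis le_trans)
  obtain vs where vs: "vs \<in> V" "rad V E = ecc V E vs" using rad_attained[OF fin] halt by blast
  have eq: "ecc V E u = rad V E" using le[OF vs(1)] vs rad_le[OF fin halt(3), where E=E] by auto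
  have cardle: "card L \<le> card (antipode V E r ` V)"
    using iv halt fin by (auto intro: card_mono)
  show ?thesis using halt iv eq cardle by (auto simp: final_ok_def radius_certificate_def)
next
  case (stop u L a K c q)
  let ?L = "insert a L" and ?K = "insert u K"
  have LV: "L \<subseteq> V" using iv stop(1) ant_sub[OF fin inj, where E=E] by auto
  have finL: "finite L" using LV fin finite_subset by blast
  have KV: "?K \<subseteq> V" using iv stop(1,3) by auto
  have ap: "a \<in> V" "dist E u a = ecc V E u" using antipode_props[OF fin inj stop(3)] stop(6) by auto
  have "eL E L u \<le> ecc V E u" using eL_le_ecc[OF fin LV] .
  then have lt: "eL E L u < ecc V E u" using stop(5) by auto
  have aL: "a \<notin> L" using dist_le_eL[OF finL, of a E u] ap lt by auto
  have L'V: "?L \<subseteq> V" using LV ap by auto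
  have aant: "a \<in> antipode V E r ` V" using stop(3,6) by blast
  have finK: "finite ?K" using finite_subset[OF KV fin] .
  have "Min (ecc V E ` ?K) \<in> ecc V E ` ?K" using finK by (intro Min_in) auto
  then obtain w where w: "w \<in> ?K" "Min (ecc V E ` ?K) = ecc V E w" by auto
  have cle: "ecc V E c \<le> Min (ecc V E ` ?K)" using w stop(9) by auto
  define m where "m = Min (eL E ?L ` V)"
  have mle: "\<And>v. v \<in> V \<Longrightarrow> m \<le> eL E ?L v" unfolding m_def using fin by auto
  obtain vs where vs: "vs \<in> V" "rad V E = ecc V E vs" using rad_attained[OF fin, of E] stop(3) by blast
  have cV: "c \<in> V" using stop(8) KV by auto
  have "ecc V E c \<le> rad V E"
    using cle stop(7) mle[OF vs(1)] eL_le_ecc[OF fin L'V, of E vs] vs m_def by linarith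
  then have eq: "ecc V E c = rad V E" using rad_le[OF fin cV, where E=E] by auto
  have cert: "radius_certificate V E ?L"
    unfolding radius_certificate_def using mle eq cle stop(7) m_def by fastforce
  have sub: "?L \<subseteq> antipode V E r ` V" using iv stop(1) aant by auto
  have cardL: "card ?L = card L + 1" using aL finL by auto
  have cardle: "card ?L \<le> card (antipode V E r ` V)"
    using sub fin by (auto intro: card_mono)
  show ?thesis using stop(1,2) iv eq cert sub cardL cardle cV by (auto simp: final_ok_def)
next
  case (cont u L a K q)
  have LV: "L \<subseteq> V" using iv cont(1) ant_sub[OF fin inj, where E=E] by auto
  have finL: "finite L" using LV fin finite_subset by blast
  have ap: "a \<in> V" "dist E u a = ecc V E u" using antipode_props[OF fin inj cont(3)] cont(6) by auto
  have "eL E L u \<le> ecc V E u" using eL_le_ecc[OF fin LV] .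
  then have lt: "eL E L u < ecc V E u" using cont(5) by auto
  have aL: "a \<notin> L" using dist_le_eL[OF finL, of a E u] ap lt by auto
  have aant: "a \<in> antipode V E r ` V" using cont(3,6) by blast
  show ?thesis using cont(1,2,3) iv aL finL aant by auto
qed

lemma reach_inv:
  assumes fin: "finite V" and inj: "inj_on r V" and "alg_reachable V E r s"
  shows "ainv V E r s"
proof -
  have "(alg_step V E r)\<^sup>*\<^sup>* alg_init s" using assms unfolding alg_reachable_def by auto
  then show ?thesis
  proof induct
    case base then show ?case by (simp add: alg_init_def)
  next
    case (step y z) then show ?case using step_pres[OF fin inj] by blast
  qed
qed

fun msr :: "nat \<Rightarrow> 'a config \<Rightarrow> nat" where
  "msr n (Running L K q) = Suc (n - card L)"
| "msr n (Done val c L q) = 0"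

theorem theorem3:
  fixes V :: "'a set" and E :: "'a \<Rightarrow> 'a \<Rightarrow> bool" and r :: "'a \<Rightarrow> 'b::linorder"
  assumes "finite V" and "simple_graph V E" and "connected_graph V E" and "inj_on r V"
  shows "wf {(s', s). alg_reachable V E r s \<and> alg_step V E r s s'} \<and>
         (\<forall>s. alg_reachable V E r s \<longrightarrow>
           (\<exists>val c L q. s = Done val c L q) \<or> (\<exists>s'. alg_step V E r s s')) \<and>
         (\<forall>val c L q. alg_reachable V E r (Done val c L q) \<longrightarrow>
           val = rad V E \<and> c \<in> V \<and> ecc V E c = rad V E \<and>
           radius_certificate V E L \<and> L \<subseteq> antipode V E r ` V \<and>
           q \<le> 2 * card L + 1 \<and> q \<le> 2 * card (antipode V E r ` V) + 1)"
proof -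
  note fin = assms(1) and inj = assms(4)
  have Vne: "V \<noteq> {}" using assms(3) unfolding connected_graph_def by auto
  show ?thesis
proof (intro conjI allI impI)
  show "wf {(s', s). alg_reachable V E r s \<and> alg_step V E r s s'}"
  proof (rule wf_subset[OF wf_measure[of "msr (card V)"]])
    show "{(s', s). alg_reachable V E r s \<and> alg_step V E r s s'} \<subseteq> measure (msr (card V))"
    proof clarify
      fix s' s assume re: "alg_reachable V E r s" and st: "alg_step V E r s s'"
      have iv: "ainv V E r s" using reach_inv[OF fin inj re] .
      have ivs': "ainv V E r s'" using step_pres[OF fin inj st iv] .
      show "(s', s) \<in> measure (msr (card V))"
        using st
      proof cases
        case (cont u L a K q)
        have "insert a L \<subseteq> V" using ivs' cont ant_sub[OF fin inj, where E=E] by auto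
        then have "card (insert a L) \<le> card V" using fin by (rule card_mono[rotated])
        moreover have "card (insert a L) = card L + 1" using iv ivs' cont by auto
        ultimately show ?thesis using cont by auto
      qed auto
    qed
  qed
next
  fix s assume re: "alg_reachable V E r s"
  show "(\<exists>val c L q. s = Done val c L q) \<or> (\<exists>s'. alg_step V E r s s')"
  proof (cases s)
    case (Running L K q)
    have "Min (eL E L ` V) \<in> eL E L ` V" using fin Vne by (intro Min_in) auto
    then obtain u where u: "u \<in> V" "eL E L u = Min (eL E L ` V)" by auto
    have umin: "\<forall>v\<in>V. eL E L u \<le> eL E L v" using u fin by auto
    have "\<exists>s'. alg_step V E r (Running L K q) s'"
    proof (cases "ecc V E u = eL E L u")
      case True then show ?thesis using alg_step.halt[OF u(1) umin True] by blast
    next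
      case False
      show ?thesis
      proof (cases "Min (eL E (insert (antipode V E r u) L) ` V) \<ge> Min (ecc V E ` insert u K)")
        case True
        have finK: "finite (insert u K)" using reach_inv[OF fin inj re] Running fin finite_subset
          by (metis ainv.simps(1) finite_insert)
        have "Min (ecc V E ` insert u K) \<in> ecc V E ` insert u K" using finK by (intro Min_in) auto
        then obtain c where c: "c \<in> insert u K" "Min (ecc V E ` insert u K) = ecc V E c" by auto
        have "\<forall>w\<in>insert u K. ecc V E c \<le> ecc V E w" using c finK by (metis Min_le finite_imageI image_eqI)
        then show ?thesis using alg_step.stop[OF u(1) umin False refl True c(1)] by blast
      next
        case F: False
        show ?thesis using alg_step.cont[OF u(1) umin False refl F] by blast
      qed
    qed
    then show ?thesis using Running by auto
  qed auto
next
  fix val c L q assume re: "alg_reachable V E r (Done val c L q)"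
  have "final_ok V E r val c L q" using reach_inv[OF fin inj re] by simp
  then show "val = rad V E" "c \<in> V" "ecc V E c = rad V E"
           "radius_certificate V E L" "L \<subseteq> antipode V E r ` V"
           "q \<le> 2 * card L + 1" "q \<le> 2 * card (antipode V E r ` V) + 1"
    unfolding final_ok_def by auto
qed
qed

end
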